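(* Let $p=3$, $N\ge1$ and $\mathcal{L}=\{0,1,\ldots,3N-3\}$. Then $H^{\mathsf{MD}}_\mathcal{L}\ge0$ and $H^{\mathsf{MD}}_\mathcal{L}\Psi^{\mathsf{MD}}_N=0$. In particular, $\Psi^{\mathsf{MD}}_N$ is an exact zero-energy ground state of $H^{\mathsf{MD}}_\mathcal{L}$.
   Context: Setting. Fermionic creation and annihilation operators $c_k^*,c_k$ are indexed by lattice sites $k\in\mathbb{Z}$ (orbitals), with $\hat n_k=c_k^*c_k$. Let $\gamma>0$. Monomer-dimer Hamiltonian. For $j\in\mathbb{Z}$ let $$B_j=c_{j+2}c_{j+1}+3e^{-2\gamma^2}c_{j+3}c_j .$$ The formal monomer-dimer Hamiltonian is $$H^{\mathsf{MD}}=\sum_j\Bigl(4e^{-3\gamma^2/2}\hat n_j\hat n_{j+2}+B_j^*B_j\Bigr).$$ Equivalently, it is the sum over $k$ of $$\hat n_k\hat n_{k+1}+4e^{-3\gamma^2/2}\hat n_k\hat n_{k+2}+9e^{-4\gamma^2}\hat n_k\hat n_{k+3}+3e^{-2\gamma^2}\bigl(c^*_{k+1}c^*_{k+2}c_{k+3}c_k+c_k^*c_{k+3}^*c_{k+2}c_{k+1}\bigr).$$ $H^{\mathsf{MD}}_\mathcal{L}$ is defined with free boundary conditions, i.e. keeping only terms all of whose site indices lie in $\mathcal{L}$. Monomer-dimer wave function. For $k\in\mathbb{Z}$ let $$A_{\{k\}}=c_{3k}^*,\qquad A_{\{k,k+1\}}=-3e^{-2\gamma^2}c_{3k+1}^*c_{3k+2}^*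 .$$ Then $$\Psi_N^{\mathsf{MD}}=\sum_{(X_1,\ldots,X_D)}A_{X_1}\cdots A_{X_D}|\mathrm{vacuum}\rangle,$$ where the sum runs over all partitions of $\{0,1,\ldots,N-1\}$ into monomers $\{k\}$ and dimers $\{k,k+1\}$, labeled from left to right. *)

theory Defs
  imports Complex_Main "HOL-Library.Complex_Order"
begin

text \<open>A state is a
complex coefficient function on occupation sets (finite sets of sites).
Jordan-Wigner sign convention w.r.t. the natural order of sites.\<close>

type_synonym fock = "nat set \<Rightarrow> complex"

definition jw :: "nat set \<Rightarrow> nat \<Rightarrow> complex" where
  "jw S k = (-1) ^ card {j \<in> S. j < k}"

definition cre :: "nat \<Rightarrow> fock \<Rightarrow> fock" where
  "cre k \<psi> = (\<lambda>S. if k \<in> S then jw S k * \<psi> (S - {k}) else 0)"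

definition ann :: "nat \<Rightarrow> fock \<Rightarrow> fock" where
  "ann k \<psi> = (\<lambda>S. if k \<in> S then 0 else jw S k * \<psi> (insert k S))"

definition num :: "nat \<Rightarrow> fock \<Rightarrow> fock" where
  "num k \<psi> = cre k (ann k \<psi>)"

definition vac :: fock where
  "vac = (\<lambda>S. if S = {} then 1 else 0)"

definition fock_inner :: "nat set \<Rightarrow> fock \<Rightarrow> fock \<Rightarrow> complex" where
  "fock_inner L \<phi> \<psi> = (\<Sum>S\<in>Pow L. cnj (\<phi> S) * \<psi> S)"

definition HMD :: "real \<Rightarrow> nat set \<Rightarrow> fock \<Rightarrow> fock" where
  "HMD \<gamma> L \<psi> = (\<lambda>S. \<Sum>k\<in>L.
      (if k + 1 \<in> L then num k (num (k+1) \<psi>) S else 0)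
    + (if k + 2 \<in> L then complex_of_real (4 * exp (-(3 * \<gamma>^2 / 2))) * num k (num (k+2) \<psi>) S else 0)
    + (if k + 1 \<in> L \<and> k + 2 \<in> L \<and> k + 3 \<in> L then
         complex_of_real (9 * exp (-(4 * \<gamma>^2))) * num k (num (k+3) \<psi>) S
       + complex_of_real (3 * exp (-(2 * \<gamma>^2))) *
           (cre (k+1) (cre (k+2) (ann (k+3) (ann k \<psi>))) S
          + cre k (cre (k+3) (ann (k+2) (ann (k+1) \<psi>))) S)
       else 0))"

text \<open>Monomer-dimer tilings of {0..n-1}, as lists of piece lengths (1 = monomer,
 2 = dimer), left to right.\<close>
definition tilings :: "nat \<Rightarrow> nat list set" where
  "tilings n = {ts. set ts \<subseteq> {1, 2} \<and> sum_list ts = n}"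

text \<open>apply_tiling \<gamma> k ts \<psi> = A_{X_1} ... A_{X_D} \<psi> where the pieces X_i are given by ts,
 starting at position k.\<close>
fun apply_tiling :: "real \<Rightarrow> nat \<Rightarrow> nat list \<Rightarrow> fock \<Rightarrow> fock" where
  "apply_tiling \<gamma> k [] \<psi> = \<psi>"
| "apply_tiling \<gamma> k (t # ts) \<psi> =
     (if t = 1 then cre (3*k) (apply_tiling \<gamma> (k+1) ts \<psi>)
      else (\<lambda>S. complex_of_real (- 3 * exp (-(2 * \<gamma>^2))) *
              cre (3*k+1) (cre (3*k+2) (apply_tiling \<gamma> (k+2) ts \<psi>)) S))"

definition PsiMD :: "real \<Rightarrow> nat \<Rightarrow> fock" where
  "PsiMD \<gamma> N = (\<lambda>S. \<Sum>ts\<in>tilings N. apply_tiling \<gamma> 0 ts vac S)"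

end

theory Submission
  imports Defs
begin

lemma jw_eq: "{j\<in>X. j<m} = {j\<in>S. j<k} \<Longrightarrow> jw X m = jw S k"
  unfolding jw_def by simp

lemma jw_sq: "jw S k * jw S k = 1"
  unfolding jw_def by (simp add: power_add[symmetric])

lemma num_eq: "num k \<psi> S = (if k \<in> S then \<psi> S else 0)"
proof -
  have "jw (S - {k}) k = jw S k" by (rule jw_eq) auto
  then show ?thesis unfolding num_def cre_def ann_def
    by (auto simp: insert_absorb jw_sq)
qed

definition fsw :: "nat \<Rightarrow> nat set \<Rightarrow> nat set" where
  "fsw j S = insert j (insert (j+3) (S - {j+1, j+2}))"
definition gsw :: "nat \<Rightarrow> nat set \<Rightarrow> nat set" where
  "gsw j S = insert (j+1) (insert (j+2) (S - {j, j+3}))"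

lemma hop1_eq: "cre (k+1) (cre (k+2) (ann (k+3) (ann k \<psi>))) S =
  (if k \<notin> S \<and> k+1 \<in> S \<and> k+2 \<in> S \<and> k+3 \<notin> S then \<psi> (fsw k S) else 0)"
proof (cases "k \<notin> S \<and> k+1 \<in> S \<and> k+2 \<in> S \<and> k+3 \<notin> S")
  case True
  have e1: "jw S (Suc k) = jw S k" by (rule jw_eq) (use True in \<open>auto simp: less_Suc_eq numeral_3_eq_3\<close>)
  have e2: "jw (S - {Suc k}) (Suc (Suc k)) = jw S k" by (rule jw_eq) (use True in \<open>auto simp: less_Suc_eq numeral_3_eq_3\<close>)
  have e3: "jw (S - {Suc k} - {Suc (Suc k)}) (k+3) = jw S k" by (rule jw_eq) (use True in \<open>auto simp: less_Suc_eq numeral_3_eq_3\<close>)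
  have e4: "jw (insert (k+3) (S - {Suc k} - {Suc (Suc k)})) k = jw S k" by (rule jw_eq) (use True in \<open>auto simp: less_Suc_eq numeral_3_eq_3\<close>)
  have fs: "insert k (insert (k+3) (S - {Suc k} - {Suc (Suc k)})) = fsw k S"
    unfolding fsw_def by auto
  have sq: "\<And>x. jw S k * (jw S k * (jw S k * (jw S k * x))) = x"
    by (simp add: mult.assoc[symmetric] jw_sq)
  show ?thesis using True unfolding cre_def ann_def
    by (simp add: e1 e2 e3 e4 fs mult.assoc sq)
next
  case False
  then show ?thesis unfolding cre_def ann_def by auto
qed

lemma hop2_eq: "cre k (cre (k+3) (ann (k+2) (ann (k+1) \<psi>))) S =
  (if k \<in> S \<and> k+3 \<in> S \<and> k+1 \<notin> S \<and> k+2 \<notin> S then \<psi> (gsw k S) else 0)"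
proof (cases "k \<in> S \<and> k+3 \<in> S \<and> k+1 \<notin> S \<and> k+2 \<notin> S")
  case True
  have e2: "jw (S - {k}) (k+3) = jw S k" by (rule jw_eq) (use True in \<open>auto simp: less_Suc_eq numeral_3_eq_3\<close>)
  have e3: "jw (S - {k} - {k+3}) (Suc (Suc k)) = jw S k" by (rule jw_eq) (use True in \<open>auto simp: less_Suc_eq numeral_3_eq_3\<close>)
  have e4: "jw (insert (Suc (Suc k)) (S - {k} - {k+3})) (Suc k) = jw S k" by (rule jw_eq) (use True in \<open>auto simp: less_Suc_eq numeral_3_eq_3\<close>)
  have fs: "insert (Suc k) (insert (Suc (Suc k)) (S - {k} - {k+3})) = gsw k S"
    unfolding gsw_def by auto
  have sq: "\<And>x. jw S k * (jw S k * (jw S k * (jw S k * x))) = x"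
    by (simp add: mult.assoc[symmetric] jw_sq)
  show ?thesis using True unfolding cre_def ann_def
    by (simp add: e2 e3 e4 fs mult.assoc sq)
next
  case False
  then show ?thesis unfolding cre_def ann_def by auto
qed

fun sites :: "nat \<Rightarrow> nat list \<Rightarrow> nat set" where
  "sites k [] = {}"
| "sites k (t # ts) = (if t = 1 then insert (3*k) (sites (k+1) ts)
     else insert (3*k+1) (insert (3*k+2) (sites (k+2) ts)))"

fun wt :: "complex \<Rightarrow> nat list \<Rightarrow> complex" where
  "wt c [] = 1"
| "wt c (t # ts) = (if t = 1 then wt c ts else c * wt c ts)"

lemma sites_ge: "x \<in> sites k ts \<Longrightarrow> 3*k \<le> x"
  by (induction ts arbitrary: k) (auto split: if_splits, fastforce+)

lemma apply_tiling_vac: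
  "apply_tiling \<gamma> k ts vac = (\<lambda>S. if S = sites k ts then wt (complex_of_real (- 3 * exp (-(2 * \<gamma>^2)))) ts else 0)"
proof (induction ts arbitrary: k)
  case Nil
  then show ?case by (auto simp: vac_def)
next
  case (Cons t ts)
  show ?case
  proof (cases "t = 1")
    case True
    have nin: "3*k \<notin> sites (k+1) ts" using sites_ge[of "3*k" "k+1" ts] by auto
    have jw1: "jw (insert (3*k) (sites (k+1) ts)) (3*k) = 1"
    proof -
      have e: "{j \<in> insert (3*k) (sites (k+1) ts). j < 3*k} = {}" using sites_ge[of _ "k+1" ts] by force
      show ?thesis unfolding jw_def e by simp
    qed
    show ?thesis using True nin jw1 by (auto simp: Cons.IH cre_def fun_eq_iff)
  next
    case False
    have nin: "3*k+1 \<notin> sites (k+2) ts" "3*k+2 \<notin> sites (k+2) ts"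
      using sites_ge[of "3*k+1" "k+2" ts] sites_ge[of "3*k+2" "k+2" ts] by auto
    have jw1: "jw (insert (3*k+1) (insert (3*k+2) (sites (k+2) ts))) (3*k+1) = 1"
    proof -
      have e: "{j \<in> insert (3*k+1) (insert (3*k+2) (sites (k+2) ts)). j < 3*k+1} = {}" using sites_ge[of _ "k+2" ts] by force
      show ?thesis unfolding jw_def e by simp
    qed
    have jw2: "jw (insert (3*k+2) (sites (k+2) ts)) (3*k+2) = 1"
    proof -
      have e: "{j \<in> insert (3*k+2) (sites (k+2) ts). j < 3*k+2} = {}" using sites_ge[of _ "k+2" ts] by force
      show ?thesis unfolding jw_def e by simp
    qed
    have ss: "\<And>S. 3*k+1 \<in> S \<Longrightarrow> 3*k+2 \<in> S \<Longrightarrow> (S - {3*k+1} - {3*k+2} = sites (k+2) ts) = (S = insert (3*k+1) (insert (3*k+2) (sites (k+2) ts)))"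
      using nin by auto
    let ?R = "sites (k+2) ts"
    let ?S0 = "insert (3*k+1) (insert (3*k+2) ?R)"
    show ?thesis
    proof
      fix S
      show "apply_tiling \<gamma> k (t # ts) vac S = (if S = sites k (t # ts) then wt (complex_of_real (- 3 * exp (-(2 * \<gamma>^2)))) (t # ts) else 0)"
      proof (cases "S = ?S0")
        case True
        have a1: "?S0 - {3*k+1} = insert (3*k+2) ?R" using nin by auto
        have a2: "insert (3*k+2) ?R - {3*k+2} = ?R" using nin by auto
        show ?thesis using False True
          by (simp only: apply_tiling.simps sites.simps wt.simps if_False Cons.IH cre_def a1 a2 jw1 jw2) simp
      next
        case F2: False
        have "cre (3*k+1) (cre (3*k+2) (apply_tiling \<gamma> (k+2) ts vac)) S = 0"
        proof -
          have "\<not> (3*k+1 \<in> S \<and> 3*k+2 \<in> S - {3*k+1} \<and> S - {3*k+1} - {3*k+2} = ?R)"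
            using F2 by auto
          then show ?thesis unfolding Cons.IH cre_def by auto
        qed
        then show ?thesis using False F2 by simp
      qed
    qed
  qed
qed

lemma len_le_sum: "set ts \<subseteq> {1,2} \<Longrightarrow> length ts \<le> sum_list (ts::nat list)"
  by (induction ts) auto

lemma finite_tilings: "finite (tilings n)"
proof -
  have "tilings n \<subseteq> {ts. set ts \<subseteq> {1,2} \<and> length ts \<le> n}"
    unfolding tilings_def using len_le_sum by fastforce
  moreover have "finite {ts. set ts \<subseteq> {1::nat,2} \<and> length ts \<le> n}"
    by (rule finite_lists_length_le) simp
  ultimately show ?thesis by (rule finite_subset)
qed

lemma first_mono: "set (t#r) \<subseteq> {1,2} \<Longrightarrow> (3*k \<in> sites k (t#r)) = (t = 1)"
  using sites_ge[of "3*k" "k+2" r] by auto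

lemma sites_nonempty: "sites k (t#r) \<noteq> {}"
  by auto

lemma sites_inj: "set ts \<subseteq> {1,2} \<Longrightarrow> set ts' \<subseteq> {1,2} \<Longrightarrow> sites k ts = sites k ts' \<Longrightarrow> ts = ts'"
proof (induction ts arbitrary: k ts')
  case Nil
  then show ?case by (cases ts') auto
next
  case (Cons t r)
  then obtain t' r' where ts': "ts' = t' # r'" by (cases ts') auto
  have tt: "t = t'" using first_mono[of t r k] first_mono[of t' r' k] Cons.prems ts' by auto
  have sr: "set r \<subseteq> {1,2}" "set r' \<subseteq> {1,2}" using Cons.prems ts' by auto
  have eq: "sites k (t#r) = sites k (t#r')" using Cons.prems(3) ts' tt by simp
  show ?case
  proof (cases "t = 1")
    case True
    have nin: "3*k \<notin> sites (k+1) r" "3*k \<notin> sites (k+1) r'" using sites_ge[of "3*k" "k+1"] by force+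
    have "insert (3*k) (sites (k+1) r) = insert (3*k) (sites (k+1) r')" using eq True by simp
    then have "sites (k+1) r = sites (k+1) r'" using nin by (simp add: insert_ident)
    then show ?thesis using Cons.IH[OF sr] ts' tt by auto
  next
    case False
    have nin: "3*k+1 \<notin> insert (3*k+2) (sites (k+2) r)" "3*k+1 \<notin> insert (3*k+2) (sites (k+2) r')" "3*k+2 \<notin> sites (k+2) r" "3*k+2 \<notin> sites (k+2) r'"
      using sites_ge[of "3*k+1" "k+2"] sites_ge[of "3*k+2" "k+2"] by force+
    have "insert (3*k+1) (insert (3*k+2) (sites (k+2) r)) = insert (3*k+1) (insert (3*k+2) (sites (k+2) r'))"
      using eq False by simp
    then have "insert (3*k+2) (sites (k+2) r) = insert (3*k+2) (sites (k+2) r')" using insert_ident[OF nin(1) nin(2)] by blast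
    then have "sites (k+2) r = sites (k+2) r'" using insert_ident[OF nin(3) nin(4)] by blast
    then show ?thesis using Cons.IH[OF sr] ts' tt by auto
  qed
qed

lemma inv_a: "x \<in> sites k ts \<Longrightarrow> x+2 \<notin> sites k ts"
proof (induction ts arbitrary: k)
  case Nil then show ?case by simp
next
  case (Cons t r)
  show ?case
  proof (cases "t = 1")
    case True
    then have S: "sites k (t#r) = insert (3*k) (sites (k+1) r)" by simp
    show ?thesis
    proof (cases "x = 3*k")
      case True
      then show ?thesis unfolding S using sites_ge[of "x+2" "k+1" r] by auto
    next
      case False
      then have xr: "x \<in> sites (k+1) r" using Cons.prems S by auto
      then show ?thesis unfolding S using Cons.IH[OF xr] sites_ge[OF xr] by auto
    qed
  next
    case False
    then have S: "sites k (t#r) = insert (3*k+1) (insert (3*k+2) (sites (k+2) r))" by simp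
    show ?thesis
    proof (cases "x = 3*k+1 \<or> x = 3*k+2")
      case True
      then show ?thesis unfolding S using sites_ge[of "x+2" "k+2" r] by auto
    next
      case False
      then have xr: "x \<in> sites (k+2) r" using Cons.prems S by auto
      then show ?thesis unfolding S using Cons.IH[OF xr] sites_ge[OF xr] by auto
    qed
  qed
qed

lemma inv_b: "x \<in> sites k ts \<Longrightarrow> x+1 \<in> sites k ts \<Longrightarrow> x mod 3 = 1"
proof (induction ts arbitrary: k)
  case Nil then show ?case by simp
next
  case (Cons t r)
  show ?case
  proof (cases "t = 1")
    case True
    then have S: "sites k (t#r) = insert (3*k) (sites (k+1) r)" by simp
    show ?thesis
    proof (cases "x = 3*k")
      case True
      then show ?thesis using Cons.prems unfolding S using sites_ge[of "x+1" "k+1" r] by auto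
    next
      case False
      then have xr: "x \<in> sites (k+1) r" using Cons.prems S by auto
      have "x+1 \<in> sites (k+1) r" using Cons.prems S sites_ge[OF xr] by auto
      then show ?thesis using Cons.IH[OF xr] by auto
    qed
  next
    case False
    then have S: "sites k (t#r) = insert (3*k+1) (insert (3*k+2) (sites (k+2) r))" by simp
    show ?thesis
    proof (cases "x = 3*k+1 \<or> x = 3*k+2 \<or> x + 1 = 3*k+1")
      case True
      then show ?thesis using Cons.prems unfolding S using sites_ge[of "x+1" "k+2" r] sites_ge[of "x" "k+2" r] by auto
    next
      case False
      then have xr: "x \<in> sites (k+2) r" using Cons.prems S by auto
      have "x+1 \<in> sites (k+2) r" using Cons.prems S sites_ge[OF xr] by auto
      then show ?thesis using Cons.IH[OF xr] by auto
    qed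
  qed
qed

lemma inv_c: "set ts \<subseteq> {1,2} \<Longrightarrow> x \<in> sites k ts \<Longrightarrow> x+3 \<le> 3*(k + sum_list ts)"
proof (induction ts arbitrary: k)
  case Nil then show ?case by simp
next
  case (Cons t r)
  show ?case
  proof (cases "t = 1")
    case True
    then have S: "sites k (t#r) = insert (3*k) (sites (k+1) r)" by simp
    show ?thesis using Cons.prems Cons.IH[of "k+1"] True unfolding S by auto
  next
    case False
    then have t2: "t = 2" using Cons.prems by auto
    then have S: "sites k (t#r) = insert (3*k+1) (insert (3*k+2) (sites (k+2) r))" by simp
    show ?thesis using Cons.prems Cons.IH[of "k+2"] t2 unfolding S by auto
  qed
qed

lemma fsw_insert: "a \<noteq> j \<Longrightarrow> a \<noteq> j+1 \<Longrightarrow> a \<noteq> j+2 \<Longrightarrow> a \<noteq> j+3 \<Longrightarrow> fsw j (insert a X) = insert a (fsw j X)"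
  unfolding fsw_def by auto
lemma gsw_insert: "a \<noteq> j \<Longrightarrow> a \<noteq> j+1 \<Longrightarrow> a \<noteq> j+2 \<Longrightarrow> a \<noteq> j+3 \<Longrightarrow> gsw j (insert a X) = insert a (gsw j X)"
  unfolding gsw_def by auto

lemma swap1: "set ts \<subseteq> {1,2} \<Longrightarrow> j \<notin> sites k ts \<Longrightarrow> j+1 \<in> sites k ts \<Longrightarrow> j+2 \<in> sites k ts \<Longrightarrow> j+3 \<notin> sites k ts \<Longrightarrow>
  \<exists>ts'. set ts' \<subseteq> {1,2} \<and> sum_list ts' = sum_list ts \<and> sites k ts' = fsw j (sites k ts) \<and> wt c ts = c * wt c ts'"
proof (induction ts arbitrary: k)
  case Nil then show ?case by simp
next
  case (Cons t r)
  have sr: "set r \<subseteq> {1,2}" using Cons.prems by auto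
  show ?case
  proof (cases "t = 1")
    case True
    then have S: "sites k (t#r) = insert (3*k) (sites (k+1) r)" by simp
    have ge: "\<And>x. x \<in> sites (k+1) r \<Longrightarrow> 3*k+3 \<le> x" using sites_ge by fastforce
    have h0: "j \<noteq> 3*k" using Cons.prems(2) S by auto
    have h3: "j+3 \<noteq> 3*k" using Cons.prems(5) S by auto
    have h1: "j+1 \<noteq> 3*k"
    proof
      assume "j+1 = 3*k"
      then have "j+2 \<in> sites (k+1) r" using Cons.prems(4) S by auto
      then show False using ge \<open>j+1 = 3*k\<close> by fastforce
    qed
    have h2: "j+2 \<noteq> 3*k"
    proof
      assume "j+2 = 3*k"
      then have "j+1 \<in> sites (k+1) r" using Cons.prems(3) S by auto
      then show False using ge \<open>j+2 = 3*k\<close> by fastforce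
    qed
    have "j \<notin> sites (k+1) r" "j+1 \<in> sites (k+1) r" "j+2 \<in> sites (k+1) r" "j+3 \<notin> sites (k+1) r"
      using Cons.prems(2-5) S h1 h2 by auto
    from Cons.IH[OF sr this] obtain r' where r': "set r' \<subseteq> {1,2}" "sum_list r' = sum_list r"
      "sites (k+1) r' = fsw j (sites (k+1) r)" "wt c r = c * wt c r'" by blast
    show ?thesis
      by (rule exI[of _ "1#r'"]) (use r' True S h0 h1 h2 h3 in \<open>simp add: fsw_insert\<close>)
  next
    case False
    then have t2: "t = 2" using Cons.prems by auto
    then have S: "sites k (t#r) = insert (3*k+1) (insert (3*k+2) (sites (k+2) r))" by simp
    have ge: "\<And>x. x \<in> sites (k+2) r \<Longrightarrow> 3*k+6 \<le> x" using sites_ge by fastforce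
    show ?thesis
    proof (cases "j = 3*k")
      case True
      have R: "sites (k+2) r - {3*k+1, 3*k+2} = sites (k+2) r" using ge by fastforce
      have "fsw j (sites k (t#r)) = insert (3*k) (insert (3*k+3) (sites (k+2) r))"
        unfolding S fsw_def True using ge by fastforce
      then show ?thesis
        by (intro exI[of _ "1#1#r"]) (use t2 sr in \<open>simp add: numeral_2_eq_2 add.commute\<close>)
    next
      case jne: False
      have h1: "j+1 \<in> sites (k+2) r"
        using Cons.prems(2,3) S jne by auto
      then have jge: "3*k+5 \<le> j" using ge by fastforce
      have "j \<notin> sites (k+2) r" "j+1 \<in> sites (k+2) r" "j+2 \<in> sites (k+2) r" "j+3 \<notin> sites (k+2) r"
        using Cons.prems(2-5) S h1 jge by auto
      from Cons.IH[OF sr this] obtain r' where r': "set r' \<subseteq> {1,2}" "sum_list r' = sum_list r"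
        "sites (k+2) r' = fsw j (sites (k+2) r)" "wt c r = c * wt c r'" by blast
      show ?thesis
        by (rule exI[of _ "2#r'"]) (use r' t2 S jge in \<open>simp add: fsw_insert\<close>)
    qed
  qed
qed

lemma swap2: "set ts \<subseteq> {1,2} \<Longrightarrow> j \<in> sites k ts \<Longrightarrow> j+1 \<notin> sites k ts \<Longrightarrow> j+2 \<notin> sites k ts \<Longrightarrow> j+3 \<in> sites k ts \<Longrightarrow>
  \<exists>ts'. set ts' \<subseteq> {1,2} \<and> sum_list ts' = sum_list ts \<and> sites k ts' = gsw j (sites k ts) \<and> wt c ts' = c * wt c ts"
proof (induction ts arbitrary: k)
  case Nil then show ?case by simp
next
  case (Cons t r)
  have sr: "set r \<subseteq> {1,2}" using Cons.prems by auto
  show ?case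
  proof (cases "t = 1")
    case True
    then have S: "sites k (t#r) = insert (3*k) (sites (k+1) r)" by simp
    have ge: "\<And>x. x \<in> sites (k+1) r \<Longrightarrow> 3*k+3 \<le> x" using sites_ge by fastforce
    show ?thesis
    proof (cases "j = 3*k")
      case jk: True
      have "3*(k+1) \<in> sites (k+1) r" using Cons.prems(5) S jk by (auto simp: add.commute)
      then obtain t2 r2 where r: "r = t2 # r2" by (cases r) auto
      then have "t2 = 1" using first_mono[of t2 r2 "k+1"] sr \<open>3*(k+1) \<in> sites (k+1) r\<close> by auto
      then have R: "sites (k+1) r = insert (3*k+3) (sites (k+2) r2)" using r by (simp add: add.commute)
      have ge2: "\<And>x. x \<in> sites (k+2) r2 \<Longrightarrow> 3*k+6 \<le> x" using sites_ge by fastforce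
      have "gsw j (sites k (t#r)) = insert (3*k+1) (insert (3*k+2) (sites (k+2) r2))"
        unfolding S R gsw_def jk using ge2 by fastforce
      then show ?thesis
        by (intro exI[of _ "2#r2"]) (use r \<open>t2 = 1\<close> True sr in \<open>simp add: numeral_2_eq_2\<close>)
    next
      case jne: False
      have hj: "j \<in> sites (k+1) r" using Cons.prems(2) S jne by auto
      then have jge: "3*k+3 \<le> j" using ge by fastforce
      have "j \<in> sites (k+1) r" "j+1 \<notin> sites (k+1) r" "j+2 \<notin> sites (k+1) r" "j+3 \<in> sites (k+1) r"
        using Cons.prems(2-5) S hj jge by auto
      from Cons.IH[OF sr this] obtain r' where r': "set r' \<subseteq> {1,2}" "sum_list r' = sum_list r"
        "sites (k+1) r' = gsw j (sites (k+1) r)" "wt c r' = c * wt c r" by blast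
      show ?thesis
        by (rule exI[of _ "1#r'"]) (use r' True S jge in \<open>simp add: gsw_insert\<close>)
    qed
  next
    case False
    then have t2: "t = 2" using Cons.prems by auto
    then have S: "sites k (t#r) = insert (3*k+1) (insert (3*k+2) (sites (k+2) r))" by simp
    have ge: "\<And>x. x \<in> sites (k+2) r \<Longrightarrow> 3*k+6 \<le> x" using sites_ge by fastforce
    have hj: "j \<in> sites (k+2) r"
    proof -
      have "j \<noteq> 3*k+1" using Cons.prems(2,3) S by auto
      moreover have "j \<noteq> 3*k+2"
      proof
        assume "j = 3*k+2"
        then have "3*k+5 \<in> sites (k+2) r" using Cons.prems(5) S by (auto simp: add.commute)
        then show False using ge by fastforce
      qed
      ultimately show ?thesis using Cons.prems(2) S by auto
    qed
    then have jge: "3*k+6 \<le> j" using ge by fastforce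
    have "j \<in> sites (k+2) r" "j+1 \<notin> sites (k+2) r" "j+2 \<notin> sites (k+2) r" "j+3 \<in> sites (k+2) r"
      using Cons.prems(2-5) S hj jge by auto
    from Cons.IH[OF sr this] obtain r' where r': "set r' \<subseteq> {1,2}" "sum_list r' = sum_list r"
      "sites (k+2) r' = gsw j (sites (k+2) r)" "wt c r' = c * wt c r" by blast
    show ?thesis
      by (rule exI[of _ "2#r'"]) (use r' t2 S jge in \<open>simp add: gsw_insert\<close>)
  qed
qed

definition cc :: "real \<Rightarrow> complex" where
  "cc \<gamma> = complex_of_real (- 3 * exp (-(2 * \<gamma>^2)))"

lemma Psi_sum: "PsiMD \<gamma> N S = (\<Sum>ts\<in>tilings N. if S = sites 0 ts then wt (cc \<gamma>) ts else 0)"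
  unfolding PsiMD_def apply_tiling_vac cc_def by simp

lemma psi_at: "ts0 \<in> tilings N \<Longrightarrow> PsiMD \<gamma> N (sites 0 ts0) = wt (cc \<gamma>) ts0"
proof -
  assume t0: "ts0 \<in> tilings N"
  have "PsiMD \<gamma> N (sites 0 ts0) = (\<Sum>ts\<in>tilings N. if ts = ts0 then wt (cc \<gamma>) ts else 0)"
    unfolding Psi_sum
  proof (rule sum.cong[OF refl])
    fix ts assume "ts \<in> tilings N"
    then have "(sites 0 ts0 = sites 0 ts) = (ts = ts0)"
      using t0 sites_inj[of ts0 ts 0] unfolding tilings_def by auto
    then show "(if sites 0 ts0 = sites 0 ts then wt (cc \<gamma>) ts else 0) = (if ts = ts0 then wt (cc \<gamma>) ts else 0)"
      by simp
  qed
  also have "\<dots> = wt (cc \<gamma>) ts0" using t0 finite_tilings by (simp add: sum.delta')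
  finally show ?thesis .
qed

lemma psi_nz: "PsiMD \<gamma> N S \<noteq> 0 \<Longrightarrow> \<exists>ts\<in>tilings N. S = sites 0 ts"
proof (rule ccontr)
  assume "PsiMD \<gamma> N S \<noteq> 0" "\<not> (\<exists>ts\<in>tilings N. S = sites 0 ts)"
  then have "PsiMD \<gamma> N S = 0" unfolding Psi_sum by (intro sum.neutral) auto
  then show False using \<open>PsiMD \<gamma> N S \<noteq> 0\<close> by simp
qed

lemma psi_a: "x \<in> S \<Longrightarrow> x+2 \<in> S \<Longrightarrow> PsiMD \<gamma> N S = 0"
  using psi_nz inv_a by blast

lemma psi_b: "PsiMD \<gamma> N S \<noteq> 0 \<Longrightarrow> x \<in> S \<Longrightarrow> x+1 \<in> S \<Longrightarrow> x mod 3 = 1 \<and> x + 4 \<le> 3*N"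
proof -
  assume a: "PsiMD \<gamma> N S \<noteq> 0" "x \<in> S" "x+1 \<in> S"
  then obtain ts where ts: "ts \<in> tilings N" "S = sites 0 ts" using psi_nz by blast
  then show ?thesis using inv_b[of x 0 ts] inv_c[of ts "x+1" 0] a unfolding tilings_def by auto
qed

lemma gf: "j \<notin> S \<Longrightarrow> j+1 \<in> S \<Longrightarrow> j+2 \<in> S \<Longrightarrow> j+3 \<notin> S \<Longrightarrow> gsw j (fsw j S) = S"
  unfolding fsw_def gsw_def by auto
lemma fg: "j \<in> S \<Longrightarrow> j+1 \<notin> S \<Longrightarrow> j+2 \<notin> S \<Longrightarrow> j+3 \<in> S \<Longrightarrow> fsw j (gsw j S) = S"
  unfolding fsw_def gsw_def by auto

lemma F1: assumes "j \<notin> S" "j+1 \<in> S" "j+2 \<in> S" "j+3 \<notin> S"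
  shows "PsiMD \<gamma> N S = cc \<gamma> * PsiMD \<gamma> N (fsw j S)"
proof (cases "\<exists>ts\<in>tilings N. S = sites 0 ts")
  case True
  then obtain ts where ts: "ts \<in> tilings N" "S = sites 0 ts" by blast
  then obtain ts' where ts': "set ts' \<subseteq> {1,2}" "sum_list ts' = sum_list ts" "sites 0 ts' = fsw j S"
     "wt (cc \<gamma>) ts = cc \<gamma> * wt (cc \<gamma>) ts'"
    using swap1[of ts j 0 "cc \<gamma>"] assms unfolding tilings_def by auto
  have "ts' \<in> tilings N" using ts' ts unfolding tilings_def by auto
  have e1: "PsiMD \<gamma> N S = wt (cc \<gamma>) ts" using psi_at[OF ts(1)] ts(2) by simp
  have e2: "PsiMD \<gamma> N (fsw j S) = wt (cc \<gamma>) ts'" using psi_at[OF \<open>ts' \<in> tilings N\<close>] ts'(3) by simp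
  show ?thesis using e1 e2 ts'(4) by simp
next
  case False
  have "\<not> (\<exists>ts\<in>tilings N. fsw j S = sites 0 ts)"
  proof
    assume "\<exists>ts\<in>tilings N. fsw j S = sites 0 ts"
    then obtain ts where ts: "ts \<in> tilings N" "fsw j S = sites 0 ts" by blast
    have m: "j \<in> sites 0 ts" "j+1 \<notin> sites 0 ts" "j+2 \<notin> sites 0 ts" "j+3 \<in> sites 0 ts"
      using ts(2)[symmetric] unfolding fsw_def by auto
    obtain ts' where ts': "set ts' \<subseteq> {1,2}" "sum_list ts' = sum_list ts" "sites 0 ts' = gsw j (sites 0 ts)"
      using swap2[OF _ m, of "cc \<gamma>"] ts unfolding tilings_def by blast
    have "ts' \<in> tilings N" using ts' ts unfolding tilings_def by auto
    moreover have "sites 0 ts' = S" using ts'(3) ts(2) gf[OF assms] by simp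
    ultimately show False using False by blast
  qed
  then have "PsiMD \<gamma> N (fsw j S) = 0" using psi_nz[of \<gamma> N "fsw j S"] by blast
  moreover have "PsiMD \<gamma> N S = 0" using psi_nz[of \<gamma> N S] False by blast
  ultimately show ?thesis by simp
qed

lemma wt_rep: "wt c (replicate n 1) = 1"
  by (induction n) auto

lemma psi_ne: "PsiMD \<gamma> N \<noteq> (\<lambda>S. 0)"
proof -
  have t: "replicate N 1 \<in> tilings N" unfolding tilings_def by (auto simp: sum_list_replicate)
  have "PsiMD \<gamma> N (sites 0 (replicate N 1)) = 1" using psi_at[OF t] wt_rep by simp
  then show ?thesis by (metis one_neq_zero)
qed

definition c2 :: "real \<Rightarrow> complex" where "c2 \<gamma> = complex_of_real (4 * exp (-(3 * \<gamma>^2 / 2)))"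
definition c3 :: "real \<Rightarrow> complex" where "c3 \<gamma> = complex_of_real (9 * exp (-(4 * \<gamma>^2)))"
definition ca :: "real \<Rightarrow> complex" where "ca \<gamma> = complex_of_real (3 * exp (-(2 * \<gamma>^2)))"

definition Xt :: "nat set \<Rightarrow> fock \<Rightarrow> nat set \<Rightarrow> nat \<Rightarrow> complex" where
  "Xt L \<psi> S k = (if k+1 \<in> L \<and> k \<in> S \<and> k+1 \<in> S then \<psi> S else 0)"
definition Yt :: "real \<Rightarrow> nat set \<Rightarrow> fock \<Rightarrow> nat set \<Rightarrow> nat \<Rightarrow> complex" where
  "Yt \<gamma> L \<psi> S k = (if k+2 \<in> L \<and> k \<in> S \<and> k+2 \<in> S then c2 \<gamma> * \<psi> S else 0)"
definition Zk :: "real \<Rightarrow> fock \<Rightarrow> nat set \<Rightarrow> nat \<Rightarrow> complex" where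
  "Zk \<gamma> \<psi> S k = c3 \<gamma> * (if k \<in> S \<and> k+3 \<in> S then \<psi> S else 0)
     + ca \<gamma> * ((if k \<notin> S \<and> k+1 \<in> S \<and> k+2 \<in> S \<and> k+3 \<notin> S then \<psi> (fsw k S) else 0)
              + (if k \<in> S \<and> k+3 \<in> S \<and> k+1 \<notin> S \<and> k+2 \<notin> S then \<psi> (gsw k S) else 0))"
definition Zt :: "real \<Rightarrow> nat set \<Rightarrow> fock \<Rightarrow> nat set \<Rightarrow> nat \<Rightarrow> complex" where
  "Zt \<gamma> L \<psi> S k = (if k+1 \<in> L \<and> k+2 \<in> L \<and> k+3 \<in> L then Zk \<gamma> \<psi> S k else 0)"

lemma HMD_eq: "HMD \<gamma> L \<psi> S = (\<Sum>k\<in>L. Xt L \<psi> S k + Yt \<gamma> L \<psi> S k + Zt \<gamma> L \<psi> S k)"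
  unfolding HMD_def
  by (rule sum.cong[OF refl]) (simp only: num_eq hop1_eq hop2_eq, simp add: Xt_def Yt_def Zt_def Zk_def c2_def c3_def ca_def)

lemma cnj_self_nonneg: "0 \<le> cnj z * z"
  by (simp add: less_eq_complex_def)

lemma c3_sq: "c3 \<gamma> = ca \<gamma> * ca \<gamma>"
proof -
  have "exp (-(4 * \<gamma>^2)) = exp (-(2 * \<gamma>^2)) * exp (-(2 * \<gamma>^2))"
    by (simp add: exp_add[symmetric])
  then show ?thesis unfolding c3_def ca_def by (simp flip: of_real_mult)
qed

lemma cc_ca: "cc \<gamma> = - ca \<gamma>"
  unfolding cc_def ca_def by simp

lemma ca_real: "cnj (ca \<gamma>) = ca \<gamma>" unfolding ca_def by simp
lemma c2_nonneg: "0 \<le> c2 \<gamma>" unfolding c2_def by (simp add: less_eq_complex_def)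

lemma shift_sum: fixes g :: "nat \<Rightarrow> 'a::comm_monoid_add"
  assumes "g 0 = 0" "g (Suc M) = 0"
  shows "(\<Sum>k\<in>{0..M}. g (Suc k)) = (\<Sum>k\<in>{0..M}. g k)"
proof -
  have "(\<Sum>k\<in>{0..M}. g (Suc k)) = (\<Sum>k\<in>{Suc 0..Suc M}. g k)"
    by (rule sum.shift_bounds_cl_Suc_ivl[symmetric])
  also have "\<dots> = (\<Sum>k\<in>{Suc 0..M}. g k)" using assms by (simp add: sum.cl_ivl_Suc)
  also have "\<dots> = (\<Sum>k\<in>{0..M}. g k)" using assms by (simp add: sum.atLeast_Suc_atMost)
  finally show ?thesis .
qed

lemma pair:
  fixes \<psi> :: fock
  assumes L: "finite L" "j\<in>L" "j+1\<in>L" "j+2\<in>L" "j+3\<in>L"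
  shows "0 \<le> (\<Sum>S\<in>Pow L. cnj (\<psi> S) * (if j+1 \<in> S \<and> j+2 \<in> S then \<psi> S else 0))
           + (\<Sum>S\<in>Pow L. cnj (\<psi> S) * Zk \<gamma> \<psi> S j)"
proof -
  define U where "U = Pow L"
  define P where "P = {S\<in>U. j \<notin> S \<and> j+1 \<in> S \<and> j+2 \<in> S \<and> j+3 \<notin> S}"
  define Q where "Q = {S\<in>U. j \<in> S \<and> j+3 \<in> S \<and> j+1 \<notin> S \<and> j+2 \<notin> S}"
  define a where "a = ca \<gamma>"
  have fU: "finite U" unfolding U_def using L by simp
  have PU: "P \<subseteq> U" "Q \<subseteq> U" unfolding P_def Q_def by auto
  have fP: "finite P" using fU PU finite_subset by blast
  have gP: "\<And>S. S \<in> P \<Longrightarrow> gsw j (fsw j S) = S" unfolding P_def using gf by blast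
  have injf: "inj_on (fsw j) P" by (rule inj_on_inverseI[where g="gsw j"]) (rule gP)
  have fPQ: "fsw j ` P = Q"
  proof
    show "fsw j ` P \<subseteq> Q" using L unfolding P_def Q_def U_def fsw_def by auto
    show "Q \<subseteq> fsw j ` P"
    proof
      fix T assume T: "T \<in> Q"
      have "gsw j T \<in> P" using T L unfolding P_def Q_def U_def gsw_def by auto
      moreover have "T = fsw j (gsw j T)" using T unfolding Q_def by (auto simp: fg)
      ultimately show "T \<in> fsw j ` P" by blast
    qed
  qed
  have d1: "(\<Sum>S\<in>P. cnj (\<psi> S) * \<psi> S) \<le> (\<Sum>S\<in>U. cnj (\<psi> S) * (if j+1 \<in> S \<and> j+2 \<in> S then \<psi> S else 0))"
  proof -
    have "(\<Sum>S\<in>P. cnj (\<psi> S) * \<psi> S) = (\<Sum>S\<in>P. cnj (\<psi> S) * (if j+1 \<in> S \<and> j+2 \<in> S then \<psi> S else 0))"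
      by (rule sum.cong) (auto simp: P_def)
    also have "\<dots> \<le> (\<Sum>S\<in>U. cnj (\<psi> S) * (if j+1 \<in> S \<and> j+2 \<in> S then \<psi> S else 0))"
      by (rule sum_mono2[OF fU PU(1)]) (auto simp: cnj_self_nonneg)
    finally show ?thesis .
  qed
  have zsplit: "(\<Sum>S\<in>U. cnj (\<psi> S) * Zk \<gamma> \<psi> S j)
     = (\<Sum>S\<in>U. a * a * (cnj (\<psi> S) * (if j \<in> S \<and> j+3 \<in> S then \<psi> S else 0)))
     + (\<Sum>S\<in>U. if j \<notin> S \<and> j+1 \<in> S \<and> j+2 \<in> S \<and> j+3 \<notin> S then a * (cnj (\<psi> S) * \<psi> (fsw j S)) else 0)
     + (\<Sum>S\<in>U. if j \<in> S \<and> j+3 \<in> S \<and> j+1 \<notin> S \<and> j+2 \<notin> S then a * (cnj (\<psi> S) * \<psi> (gsw j S)) else 0)"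
    unfolding sum.distrib[symmetric]
    by (rule sum.cong[OF refl]) (simp add: Zk_def c3_sq a_def algebra_simps)
  have d2: "(\<Sum>S\<in>P. a * a * (cnj (\<psi> (fsw j S)) * \<psi> (fsw j S)))
      \<le> (\<Sum>S\<in>U. a * a * (cnj (\<psi> S) * (if j \<in> S \<and> j+3 \<in> S then \<psi> S else 0)))"
  proof -
    have "(\<Sum>S\<in>P. a * a * (cnj (\<psi> (fsw j S)) * \<psi> (fsw j S))) = (\<Sum>S\<in>Q. a * a * (cnj (\<psi> S) * \<psi> S))"
      unfolding fPQ[symmetric] by (simp add: sum.reindex[OF injf])
    also have "\<dots> = (\<Sum>S\<in>Q. a * a * (cnj (\<psi> S) * (if j \<in> S \<and> j+3 \<in> S then \<psi> S else 0)))"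
      by (rule sum.cong) (auto simp: Q_def)
    also have "\<dots> \<le> (\<Sum>S\<in>U. a * a * (cnj (\<psi> S) * (if j \<in> S \<and> j+3 \<in> S then \<psi> S else 0)))"
    proof (rule sum_mono2[OF fU PU(2)])
      have "0 \<le> a * a" unfolding a_def ca_def by (simp add: less_eq_complex_def)
      then show "\<And>b. b \<in> U - Q \<Longrightarrow> 0 \<le> a * a * (cnj (\<psi> b) * (if j \<in> b \<and> j + 3 \<in> b then \<psi> b else 0))"
        by (auto intro!: mult_nonneg_nonneg simp: cnj_self_nonneg)
    qed
    finally show ?thesis .
  qed
  have h1: "(\<Sum>S\<in>U. if j \<notin> S \<and> j+1 \<in> S \<and> j+2 \<in> S \<and> j+3 \<notin> S then a * (cnj (\<psi> S) * \<psi> (fsw j S)) else 0)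
     = (\<Sum>S\<in>P. a * (cnj (\<psi> S) * \<psi> (fsw j S)))"
    unfolding P_def using fU by (simp add: sum.inter_filter)
  have h2: "(\<Sum>S\<in>U. if j \<in> S \<and> j+3 \<in> S \<and> j+1 \<notin> S \<and> j+2 \<notin> S then a * (cnj (\<psi> S) * \<psi> (gsw j S)) else 0)
     = (\<Sum>S\<in>P. a * (cnj (\<psi> (fsw j S)) * \<psi> S))"
  proof -
    have "(\<Sum>S\<in>U. if j \<in> S \<and> j+3 \<in> S \<and> j+1 \<notin> S \<and> j+2 \<notin> S then a * (cnj (\<psi> S) * \<psi> (gsw j S)) else 0)
       = (\<Sum>S\<in>Q. a * (cnj (\<psi> S) * \<psi> (gsw j S)))"
      unfolding Q_def using fU by (simp add: sum.inter_filter)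
    also have "\<dots> = (\<Sum>S\<in>P. a * (cnj (\<psi> (fsw j S)) * \<psi> (gsw j (fsw j S))))"
      unfolding fPQ[symmetric] by (simp add: sum.reindex[OF injf])
    also have "\<dots> = (\<Sum>S\<in>P. a * (cnj (\<psi> (fsw j S)) * \<psi> S))"
      by (rule sum.cong) (auto simp: gP)
    finally show ?thesis .
  qed
  have sq: "(\<Sum>S\<in>P. cnj (\<psi> S) * \<psi> S) + (\<Sum>S\<in>P. a * a * (cnj (\<psi> (fsw j S)) * \<psi> (fsw j S)))
      + (\<Sum>S\<in>P. a * (cnj (\<psi> S) * \<psi> (fsw j S))) + (\<Sum>S\<in>P. a * (cnj (\<psi> (fsw j S)) * \<psi> S))
      = (\<Sum>S\<in>P. cnj (\<psi> S + a * \<psi> (fsw j S)) * (\<psi> S + a * \<psi> (fsw j S)))"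
    unfolding sum.distrib[symmetric]
    by (rule sum.cong[OF refl]) (simp add: algebra_simps a_def ca_real)
  have "0 \<le> (\<Sum>S\<in>P. cnj (\<psi> S + a * \<psi> (fsw j S)) * (\<psi> S + a * \<psi> (fsw j S)))"
    by (rule sum_nonneg) (rule cnj_self_nonneg)
  also have "\<dots> \<le> (\<Sum>S\<in>U. cnj (\<psi> S) * (if j+1 \<in> S \<and> j+2 \<in> S then \<psi> S else 0))
           + (\<Sum>S\<in>U. cnj (\<psi> S) * Zk \<gamma> \<psi> S j)"
    unfolding sq[symmetric] zsplit h1 h2 using d1 d2 by (simp add: add_mono algebra_simps)
  finally show ?thesis unfolding U_def .
qed

lemma E0: "(if j+1 \<in> S \<and> j+2 \<in> S then PsiMD \<gamma> N S else 0) + Zk \<gamma> (PsiMD \<gamma> N) S j = 0"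
proof -
  let ?P = "PsiMD \<gamma> N"
  consider (A) "j \<notin> S \<and> j+1 \<in> S \<and> j+2 \<in> S \<and> j+3 \<notin> S"
    | (B) "j \<in> S \<and> j+3 \<in> S \<and> j+1 \<notin> S \<and> j+2 \<notin> S"
    | (C) "j+1 \<in> S \<and> j+2 \<in> S \<and> (j \<in> S \<or> j+3 \<in> S)"
    | (D) "j \<in> S \<and> j+3 \<in> S \<and> (j+1 \<in> S \<or> j+2 \<in> S)"
    | (E) "\<not> (j+1 \<in> S \<and> j+2 \<in> S) \<and> \<not> (j \<in> S \<and> j+3 \<in> S)"
    by blast
  then show ?thesis
  proof cases
    case A
    have "?P S = cc \<gamma> * ?P (fsw j S)" using A F1 by blast
    then show ?thesis using A by (simp add: Zk_def cc_ca)
  next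
    case B
    let ?T = "gsw j S"
    have T: "j \<notin> ?T" "j+1 \<in> ?T" "j+2 \<in> ?T" "j+3 \<notin> ?T" unfolding gsw_def by auto
    have fT: "fsw j ?T = S" using B fg by blast
    have "?P ?T = cc \<gamma> * ?P S" using F1[OF T, of \<gamma> N] fT by simp
    then show ?thesis using B by (simp add: Zk_def cc_ca c3_sq algebra_simps)
  next
    case C
    have e: "j+1+2 = j+3" by simp
    have "?P S = 0"
    proof (cases "j \<in> S")
      case True then show ?thesis using C psi_a[of j S \<gamma> N] by blast
    next
      case False then show ?thesis using C psi_a[of "j+1" S \<gamma> N] e by metis
    qed
    then show ?thesis using C by (auto simp: Zk_def)
  next
    case D
    have e: "j+1+2 = j+3" by simp
    have "?P S = 0"
    proof (cases "j+2 \<in> S")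
      case True then show ?thesis using D psi_a[of j S \<gamma> N] by blast
    next
      case False then show ?thesis using D psi_a[of "j+1" S \<gamma> N] e by metis
    qed
    then show ?thesis using D by (auto simp: Zk_def)
  next
    case E
    then show ?thesis by (auto simp: Zk_def)
  qed
qed

lemma H0: assumes N: "N \<ge> 1" shows "HMD \<gamma> {0..3*N-3} (PsiMD \<gamma> N) S = 0"
proof -
  define M where "M = 3*N-3"
  define L where "L = {0..M}"
  let ?P = "PsiMD \<gamma> N"
  have Y0: "\<And>k. Yt \<gamma> L ?P S k = 0" unfolding Yt_def using psi_a by auto
  have reidx: "(\<Sum>k\<in>L. Xt L ?P S k) = (\<Sum>k\<in>L. if k+1 \<in> L \<and> k+2 \<in> L \<and> k+3 \<in> L then (if k+1 \<in> S \<and> k+2 \<in> S then ?P S else 0) else 0)"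
  proof (cases "?P S = 0")
    case z: True
    show ?thesis unfolding Xt_def z if_cancel by simp
  next
    case False
    define g where "g k = (if k \<in> S \<and> k+1 \<in> S then ?P S else 0)" for k
    have gz: "g k \<noteq> 0 \<Longrightarrow> 1 \<le> k \<and> k+2 \<le> M" for k
    proof -
      assume "g k \<noteq> 0"
      then have "k \<in> S" "k+1 \<in> S" unfolding g_def by (auto split: if_splits)
      then have "k mod 3 = 1 \<and> k+4 \<le> 3*N" using psi_b[OF False] by blast
      then show ?thesis unfolding M_def by presburger
    qed
    have "(\<Sum>k\<in>L. Xt L ?P S k) = (\<Sum>k\<in>{0..M}. g k)"
      unfolding L_def
    proof (rule sum.cong[OF refl])
      fix k assume "k \<in> {0..M}"
      show "Xt {0..M} ?P S k = g k"
        using gz[of k] False unfolding Xt_def g_def by (auto split: if_splits)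
    qed
    also have "\<dots> = (\<Sum>k\<in>{0..M}. g (Suc k))"
      by (rule shift_sum[symmetric]) (use gz[of 0] gz[of "Suc M"] in auto)
    also have "\<dots> = (\<Sum>k\<in>L. if k+1 \<in> L \<and> k+2 \<in> L \<and> k+3 \<in> L then (if k+1 \<in> S \<and> k+2 \<in> S then ?P S else 0) else 0)"
      unfolding L_def
    proof (rule sum.cong[OF refl])
      fix k assume "k \<in> {0..M}"
      show "g (Suc k) = (if k+1 \<in> {0..M} \<and> k+2 \<in> {0..M} \<and> k+3 \<in> {0..M} then (if k+1 \<in> S \<and> k+2 \<in> S then ?P S else 0) else 0)"
        using gz[of "Suc k"] False unfolding g_def by (auto split: if_splits)
    qed
    finally show ?thesis .
  qed
  have "HMD \<gamma> L ?P S = (\<Sum>k\<in>L. Xt L ?P S k) + (\<Sum>k\<in>L. Zt \<gamma> L ?P S k)"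
    unfolding HMD_eq Y0 by (simp add: sum.distrib)
  also have "\<dots> = (\<Sum>k\<in>L. if k+1 \<in> L \<and> k+2 \<in> L \<and> k+3 \<in> L then
        (if k+1 \<in> S \<and> k+2 \<in> S then ?P S else 0) + Zk \<gamma> ?P S k else 0)"
    unfolding reidx sum.distrib[symmetric] Zt_def by (rule sum.cong[OF refl]) simp
  also have "\<dots> = 0" by (intro sum.neutral ballI) (simp only: E0 if_cancel)
  finally show ?thesis unfolding L_def M_def .
qed

definition DX :: "fock \<Rightarrow> nat set \<Rightarrow> nat \<Rightarrow> complex" where
  "DX \<psi> L k = (\<Sum>S\<in>Pow L. cnj (\<psi> S) * (if k \<in> S \<and> k+1 \<in> S then \<psi> S else 0))"

lemma DX_nonneg: "0 \<le> DX \<psi> L k"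
  unfolding DX_def by (rule sum_nonneg) (auto simp: cnj_self_nonneg)

lemma c2_term: "0 \<le> cnj z * (c2 \<gamma> * z)"
proof -
  have eq: "cnj z * (c2 \<gamma> * z) = c2 \<gamma> * (cnj z * z)" by simp
  show ?thesis unfolding eq by (rule mult_nonneg_nonneg[OF c2_nonneg cnj_self_nonneg])
qed

lemma Hpos: "0 \<le> fock_inner {0..M} \<psi> (HMD \<gamma> {0..M} \<psi>)"
proof -
  define L where "L = {0..(M::nat)}"
  define EZ where "EZ k = (\<Sum>S\<in>Pow L. cnj (\<psi> S) * Zk \<gamma> \<psi> S k)" for k
  define AY where "AY k = (\<Sum>S\<in>Pow L. cnj (\<psi> S) * Yt \<gamma> L \<psi> S k)" for k
  have fL: "finite L" unfolding L_def by simp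
  have AY: "0 \<le> AY k" for k
    unfolding AY_def Yt_def
    by (rule sum_nonneg) (simp add: c2_term)
  have AX: "(\<Sum>S\<in>Pow L. cnj (\<psi> S) * Xt L \<psi> S k) = (if k+1 \<in> L then DX \<psi> L k else 0)" for k
    unfolding DX_def Xt_def by (cases "k+1 \<in> L") (auto intro!: sum.cong)
  have AZ: "(\<Sum>S\<in>Pow L. cnj (\<psi> S) * Zt \<gamma> L \<psi> S k) = (if k+1 \<in> L \<and> k+2 \<in> L \<and> k+3 \<in> L then EZ k else 0)" for k
    unfolding EZ_def Zt_def by (cases "k+1 \<in> L \<and> k+2 \<in> L \<and> k+3 \<in> L") auto
  have e1: "fock_inner L \<psi> (HMD \<gamma> L \<psi>) = (\<Sum>k\<in>L. (if k+1 \<in> L then DX \<psi> L k else 0) + AY k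
        + (if k+1 \<in> L \<and> k+2 \<in> L \<and> k+3 \<in> L then EZ k else 0))"
    unfolding fock_inner_def HMD_eq sum_distrib_left distrib_left sum.distrib
    by (subst (1 2 3) sum.swap) (simp add: AX AZ AY_def)
  also have "\<dots> = (\<Sum>k\<in>L. if k+1 \<in> L then DX \<psi> L k else 0) + (\<Sum>k\<in>L. AY k)
        + (\<Sum>k\<in>L. if k+1 \<in> L \<and> k+2 \<in> L \<and> k+3 \<in> L then EZ k else 0)"
    by (simp add: sum.distrib)
  finally have e1': "fock_inner L \<psi> (HMD \<gamma> L \<psi>) = (\<Sum>k\<in>L. if k+1 \<in> L then DX \<psi> L k else 0) + (\<Sum>k\<in>L. AY k)
        + (\<Sum>k\<in>L. if k+1 \<in> L \<and> k+2 \<in> L \<and> k+3 \<in> L then EZ k else 0)" .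
  have i1: "(\<Sum>k\<in>L. if k+1 \<in> L then DX \<psi> L k else 0) + (\<Sum>k\<in>L. AY k)
        + (\<Sum>k\<in>L. if k+1 \<in> L \<and> k+2 \<in> L \<and> k+3 \<in> L then EZ k else 0) \<ge> (\<Sum>k\<in>L. if k+1 \<in> L \<and> k+2 \<in> L \<and> k+3 \<in> L then DX \<psi> L (k+1) else 0)
        + (\<Sum>k\<in>L. if k+1 \<in> L \<and> k+2 \<in> L \<and> k+3 \<in> L then EZ k else 0)"
  proof -
    define h where "h k = (if 1 \<le> k \<and> k+2 \<le> M then DX \<psi> L k else 0)" for k
    have "(\<Sum>k\<in>L. if k+1 \<in> L \<and> k+2 \<in> L \<and> k+3 \<in> L then DX \<psi> L (k+1) else 0) = (\<Sum>k\<in>{0..M}. h (Suc k))"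
      unfolding L_def h_def by (rule sum.cong) auto
    also have "\<dots> = (\<Sum>k\<in>{0..M}. h k)" by (rule shift_sum) (auto simp: h_def)
    also have "\<dots> \<le> (\<Sum>k\<in>L. if k+1 \<in> L then DX \<psi> L k else 0)"
      unfolding L_def h_def by (rule sum_mono) (auto simp: DX_nonneg)
    finally have "(\<Sum>k\<in>L. if k+1 \<in> L \<and> k+2 \<in> L \<and> k+3 \<in> L then DX \<psi> L (k+1) else 0)
       \<le> (\<Sum>k\<in>L. if k+1 \<in> L then DX \<psi> L k else 0)" .
    moreover have "0 \<le> (\<Sum>k\<in>L. AY k)" by (rule sum_nonneg) (rule AY)
    ultimately show ?thesis by (intro add_right_mono add_increasing2)
  qed
  have e2: "(\<Sum>k\<in>L. if k+1 \<in> L \<and> k+2 \<in> L \<and> k+3 \<in> L then DX \<psi> L (k+1) else 0)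
        + (\<Sum>k\<in>L. if k+1 \<in> L \<and> k+2 \<in> L \<and> k+3 \<in> L then EZ k else 0)
      = (\<Sum>k\<in>L. if k+1 \<in> L \<and> k+2 \<in> L \<and> k+3 \<in> L then DX \<psi> L (k+1) + EZ k else 0)"
    by (simp add: sum.distrib[symmetric] if_distrib) (rule sum.cong; simp)
  have n1: "0 \<le> (\<Sum>k\<in>L. if k+1 \<in> L \<and> k+2 \<in> L \<and> k+3 \<in> L then DX \<psi> L (k+1) + EZ k else 0)"
  proof (rule sum_nonneg)
    fix k assume k: "k \<in> L"
    show "0 \<le> (if k+1 \<in> L \<and> k+2 \<in> L \<and> k+3 \<in> L then DX \<psi> L (k+1) + EZ k else 0)"
    proof (cases "k+1 \<in> L \<and> k+2 \<in> L \<and> k+3 \<in> L")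
      case True
      have "DX \<psi> L (k+1) = (\<Sum>S\<in>Pow L. cnj (\<psi> S) * (if k+1 \<in> S \<and> k+2 \<in> S then \<psi> S else 0))"
        unfolding DX_def by simp
      then show ?thesis using True pair[OF fL k, of \<psi> \<gamma>] unfolding EZ_def by simp
    qed auto
  qed
  have "0 \<le> fock_inner L \<psi> (HMD \<gamma> L \<psi>)"
    unfolding e1' using order_trans[OF n1[unfolded e2[symmetric]] i1] .
  then show ?thesis unfolding L_def .
qed

theorem proposition3p2:
  fixes \<gamma> :: real and N :: nat
  assumes "\<gamma> > 0" and "N \<ge> 1"
  defines "L \<equiv> {0..3*N-3}"
  shows "(\<forall>\<psi>. (\<forall>S. \<not> S \<subseteq> L \<longrightarrow> \<psi> S = 0) \<longrightarrow> 0 \<le> fock_inner L \<psi> (HMD \<gamma> L \<psi>))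
       \<and> HMD \<gamma> L (PsiMD \<gamma> N) = (\<lambda>S. 0)
       \<and> PsiMD \<gamma> N \<noteq> (\<lambda>S. 0)"
proof (intro conjI)
  show "\<forall>\<psi>. (\<forall>S. \<not> S \<subseteq> L \<longrightarrow> \<psi> S = 0) \<longrightarrow> 0 \<le> fock_inner L \<psi> (HMD \<gamma> L \<psi>)"
    unfolding L_def using Hpos by blast
  show "HMD \<gamma> L (PsiMD \<gamma> N) = (\<lambda>S. 0)"
    unfolding L_def using H0[OF assms(2)] by (simp add: fun_eq_iff)
  show "PsiMD \<gamma> N \<noteq> (\<lambda>S. 0)" by (rule psi_ne)
qed

end
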